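(* The theory $T=\mathrm{Th}(\mathbb{U})$ has the independence property if and only if there are a tuple of variables $x$ and a finite set $\Delta$ of formulas of $\mathcal{L}(\mathbb{U})$ such that $\mathrm{opD}(\{x=x\},\Delta)=\omega$.
   Context: $T$ complete, monster model $\mathbb{U}$. $\phi^1=\phi$, $\phi^0=\neg\phi$. For $0<n<\omega$, a partial type $\pi(x)$ and finite set $\Delta$ of partitioned formulas $\phi(x,y)$ of $\mathcal{L}(\mathbb{U})$: $\mathrm{opR}_n(\pi,\Delta)\ge0$ if $\pi$ consistent; limits as usual; $\mathrm{opR}_n(\pi,\Delta)\ge\alpha+1$ iff there are instances $\phi_0(x,a_0),\dots,\phi_{n-1}(x,a_{n-1})$ from $\Delta$ with $\mathrm{opR}_n(\pi\cup\{\bigwedge_{i<n}\phi_i(x,a_i)^{\sigma(i)}\},\Delta)\ge\alpha$ for all $\sigma\in 2^n$; $\infty$ means $\ge$ all ordinals. The localized op-dimension is $\mathrm{opD}(\pi,\Delta)=\sup\{0<n<\omega:\mathrm{opR}_n(\pi,\Delta)=\infty\}\le\omega$. A formula $\phi(x,y)$ has the independence property if for every $N$ there is $B\subseteq\mathbb{U}^y$, $|B|=N$, such that all $2^N$ combinations $\{\phi(x,b)^{t_b}:b\in B\}$ are consistent; $T$ has the independence property if some formula does. *)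

theory Defs
  imports Main "HOL-Library.Extended_Nat" "HOL-Library.Countable_Set"
begin

datatype 'f trm = Var nat | App 'f "'f trm list"

datatype ('f, 'r) fm =
    FEq "'f trm" "'f trm"
  | FRel 'r "'f trm list"
  | FNeg "('f, 'r) fm"
  | FConj "('f, 'r) fm" "('f, 'r) fm"
  | FEx nat "('f, 'r) fm"

primrec eval_trm :: "('f \<Rightarrow> 'a list \<Rightarrow> 'a) \<Rightarrow> (nat \<Rightarrow> 'a) \<Rightarrow> 'f trm \<Rightarrow> 'a" where
  "eval_trm I e (Var v) = e v"
| "eval_trm I e (App f ts) = I f (map (eval_trm I e) ts)"

primrec wf_trm :: "('f \<Rightarrow> nat) \<Rightarrow> 'f trm \<Rightarrow> bool" where
  "wf_trm ar (Var v) = True"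
| "wf_trm ar (App f ts) = (length ts = ar f \<and> list_all (wf_trm ar) ts)"

primrec fv_trm :: "'f trm \<Rightarrow> nat set" where
  "fv_trm (Var v) = {v}"
| "fv_trm (App f ts) = \<Union> (set (map fv_trm ts))"

primrec satf :: "('f \<Rightarrow> 'a list \<Rightarrow> 'a) \<Rightarrow> ('r \<Rightarrow> 'a list \<Rightarrow> bool) \<Rightarrow> (nat \<Rightarrow> 'a)
    \<Rightarrow> ('f, 'r) fm \<Rightarrow> bool" where
  "satf I R e (FEq s t) = (eval_trm I e s = eval_trm I e t)"
| "satf I R e (FRel r ts) = R r (map (eval_trm I e) ts)"
| "satf I R e (FNeg \<phi>) = (\<not> satf I R e \<phi>)"
| "satf I R e (FConj \<phi> \<psi>) = (satf I R e \<phi> \<and> satf I R e \<psi>)"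
| "satf I R e (FEx v \<phi>) = (\<exists>a. satf I R (e(v := a)) \<phi>)"

primrec wf_fm :: "('f \<Rightarrow> nat) \<Rightarrow> ('r \<Rightarrow> nat) \<Rightarrow> ('f, 'r) fm \<Rightarrow> bool" where
  "wf_fm af ar (FEq s t) = (wf_trm af s \<and> wf_trm af t)"
| "wf_fm af ar (FRel r ts) = (length ts = ar r \<and> (\<forall>t\<in>set ts. wf_trm af t))"
| "wf_fm af ar (FNeg \<phi>) = wf_fm af ar \<phi>"
| "wf_fm af ar (FConj \<phi> \<psi>) = (wf_fm af ar \<phi> \<and> wf_fm af ar \<psi>)"
| "wf_fm af ar (FEx v \<phi>) = wf_fm af ar \<phi>"

primrec fv :: "('f, 'r) fm \<Rightarrow> nat set" where
  "fv (FEq s t) = fv_trm s \<union> fv_trm t"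
| "fv (FRel r ts) = (\<Union>t\<in>set ts. fv_trm t)"
| "fv (FNeg \<phi>) = fv \<phi>"
| "fv (FConj \<phi> \<psi>) = fv \<phi> \<union> fv \<psi>"
| "fv (FEx v \<phi>) = fv \<phi> - {v}"

text \<open>An L-structure with universe the type 'a (the monster model U).\<close>

record ('f, 'r, 'a) lstruct =
  arF :: "'f \<Rightarrow> nat"
  arR :: "'r \<Rightarrow> nat"
  funI :: "'f \<Rightarrow> 'a list \<Rightarrow> 'a"
  relI :: "'r \<Rightarrow> 'a list \<Rightarrow> bool"

text \<open>The language L(U): function symbols 'f + 'a, where Inr a is a constant naming a.\<close>

definition arU :: "('f, 'r, 'a) lstruct \<Rightarrow> 'f + 'a \<Rightarrow> nat" where
  "arU M s = (case s of Inl f \<Rightarrow> arF M f | Inr a \<Rightarrow> 0)"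

definition funU :: "('f, 'r, 'a) lstruct \<Rightarrow> 'f + 'a \<Rightarrow> 'a list \<Rightarrow> 'a" where
  "funU M s = (case s of Inl f \<Rightarrow> funI M f | Inr a \<Rightarrow> (\<lambda>_. a))"

definition satL :: "('f, 'r, 'a) lstruct \<Rightarrow> (nat \<Rightarrow> 'a) \<Rightarrow> ('f, 'r) fm \<Rightarrow> bool" where
  "satL M e \<phi> = satf (funI M) (relI M) e \<phi>"

definition wfL :: "('f, 'r, 'a) lstruct \<Rightarrow> ('f, 'r) fm \<Rightarrow> bool" where
  "wfL M \<phi> = wf_fm (arF M) (arR M) \<phi>"

definition satU :: "('f, 'r, 'a) lstruct \<Rightarrow> (nat \<Rightarrow> 'a) \<Rightarrow> ('f + 'a, 'r) fm \<Rightarrow> bool" where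
  "satU M e \<phi> = satf (funU M) (relI M) e \<phi>"

definition wfU :: "('f, 'r, 'a) lstruct \<Rightarrow> ('f + 'a, 'r) fm \<Rightarrow> bool" where
  "wfU M \<phi> = wf_fm (arU M) (arR M) \<phi>"

definition params :: "('f + 'a, 'r) fm \<Rightarrow> 'a set" where
  "params \<phi> = {a. Inr a \<in> set1_fm \<phi>}"

section \<open>Monster model: (at least) aleph_1-saturation\<close>

definition aleph1_saturated :: "('f, 'r, 'a) lstruct \<Rightarrow> bool" where
  "aleph1_saturated M \<longleftrightarrow>
    (\<forall>(A :: 'a set) (\<Sigma> :: ('f + 'a, 'r) fm set) v.
       countable A \<longrightarrow>
       (\<forall>\<phi>\<in>\<Sigma>. wfU M \<phi> \<and> fv \<phi> \<subseteq> {v} \<and> params \<phi> \<subseteq> A) \<longrightarrow>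
       (\<forall>F\<subseteq>\<Sigma>. finite F \<longrightarrow> (\<exists>a. \<forall>\<phi>\<in>F. satU M (\<lambda>_. a) \<phi>)) \<longrightarrow>
       (\<exists>a. \<forall>\<phi>\<in>\<Sigma>. satU M (\<lambda>_. a) \<phi>))"

definition env :: "nat list \<Rightarrow> 'a list \<Rightarrow> nat list \<Rightarrow> 'a list \<Rightarrow> nat \<Rightarrow> 'a" where
  "env xs b ys c v = (case map_of (zip xs b @ zip ys c) v of Some a \<Rightarrow> a | None \<Rightarrow> undefined)"

text \<open>A partitioned L(U)-formula phi(x,y) (x = xs fixed): the formula with its y-tuple.\<close>

type_synonym ('f, 'r, 'a) pfm = "('f + 'a, 'r) fm \<times> nat list"

definition ok_pfm :: "('f, 'r, 'a) lstruct \<Rightarrow> nat list \<Rightarrow> ('f, 'r, 'a) pfm \<Rightarrow> bool" where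
  "ok_pfm M xs p \<longleftrightarrow> (case p of (\<phi>, ys) \<Rightarrow>
     wfU M \<phi> \<and> distinct ys \<and> set xs \<inter> set ys = {} \<and> fv \<phi> \<subseteq> set xs \<union> set ys)"

text \<open>The instance phi(x,c), as the set of x-tuples realizing it.\<close>

definition inst :: "('f, 'r, 'a) lstruct \<Rightarrow> nat list \<Rightarrow> ('f, 'r, 'a) pfm \<Rightarrow> 'a list
    \<Rightarrow> 'a list \<Rightarrow> bool" where
  "inst M xs p c = (\<lambda>b. satU M (env xs b (snd p) c) (fst p))"

text \<open>A partial type in x is represented by the set of (definable) conditions on x-tuples;
  consistency (with the elementary diagram of U) = finite satisfiability in U.\<close>

definition consistent :: "nat list \<Rightarrow> ('a list \<Rightarrow> bool) set \<Rightarrow> bool" where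
  "consistent xs \<pi> \<longleftrightarrow>
    (\<forall>F\<subseteq>\<pi>. finite F \<longrightarrow> (\<exists>b. length b = length xs \<and> (\<forall>p\<in>F. p b)))"

text \<open>One derivation step of opR_n: pi has rank \<ge> alpha+1 iff it splits by n instances
  from Delta into 2^n extensions of rank \<ge> alpha.\<close>

definition opR_step :: "('f, 'r, 'a) lstruct \<Rightarrow> nat \<Rightarrow> nat list \<Rightarrow> ('f, 'r, 'a) pfm set
    \<Rightarrow> ('a list \<Rightarrow> bool) set set \<Rightarrow> ('a list \<Rightarrow> bool) set set" where
  "opR_step M n xs \<Delta> S = {\<pi>. consistent xs \<pi> \<and>
     (\<exists>(ps :: nat \<Rightarrow> ('f, 'r, 'a) pfm) (cs :: nat \<Rightarrow> 'a list).
        (\<forall>i<n. ps i \<in> \<Delta> \<and> length (cs i) = length (snd (ps i))) \<and>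
        (\<forall>\<sigma> :: nat \<Rightarrow> bool.
           \<pi> \<union> {\<lambda>b. \<forall>i<n. inst M xs (ps i) (cs i) b = \<sigma> i} \<in> S))}"

text \<open>opR_n(pi,Delta) = \<infinity> (i.e. \<ge> every ordinal): membership in the greatest fixed point
  of the derivation operator (the limit of the ordinal-indexed derivation).\<close>

definition opR_inf :: "('f, 'r, 'a) lstruct \<Rightarrow> nat \<Rightarrow> nat list \<Rightarrow> ('f, 'r, 'a) pfm set
    \<Rightarrow> ('a list \<Rightarrow> bool) set \<Rightarrow> bool" where
  "opR_inf M n xs \<Delta> \<pi> \<longleftrightarrow> \<pi> \<in> gfp (opR_step M n xs \<Delta>)"

text \<open>opD(pi,Delta) = sup {0<n<omega : opR_n(pi,Delta) = \<infinity>}, valued in omega+1 = enat.\<close>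

definition opD :: "('f, 'r, 'a) lstruct \<Rightarrow> nat list \<Rightarrow> ('f, 'r, 'a) pfm set
    \<Rightarrow> ('a list \<Rightarrow> bool) set \<Rightarrow> enat" where
  "opD M xs \<Delta> \<pi> = Sup (enat ` {n. 0 < n \<and> opR_inf M n xs \<Delta> \<pi>})"

definition formula_IP :: "('f, 'r, 'a) lstruct \<Rightarrow> ('f, 'r) fm \<Rightarrow> nat list \<Rightarrow> nat list \<Rightarrow> bool" where
  "formula_IP M \<phi> xs ys \<longleftrightarrow>
     wfL M \<phi> \<and> distinct xs \<and> distinct ys \<and> set xs \<inter> set ys = {} \<and> fv \<phi> \<subseteq> set xs \<union> set ys \<and>
     (\<forall>N::nat. \<exists>B. B \<subseteq> {c. length c = length ys} \<and> finite B \<and> card B = N \<and>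
        (\<forall>t :: 'a list \<Rightarrow> bool. \<exists>b. length b = length xs \<and>
            (\<forall>c\<in>B. satL M (env xs b ys c) \<phi> = t c)))"

definition T_has_IP :: "('f, 'r, 'a) lstruct \<Rightarrow> bool" where
  "T_has_IP M \<longleftrightarrow> (\<exists>\<phi> xs ys. formula_IP M \<phi> xs ys)"

end

theory Submission
  imports Defs
begin


lemma coinc_trm: "(\<forall>v\<in>fv_trm t. e v = e' v) \<Longrightarrow> eval_trm I e t = eval_trm I e' t"
  by (induction t) (auto cong: map_cong)

lemma coinc: "(\<forall>v\<in>fv \<phi>. e v = e' v) \<Longrightarrow> satf I R e \<phi> = satf I R e' \<phi>"
proof (induction \<phi> arbitrary: e e')
  case (FEq s t) then show ?case using coinc_trm[of s e e' I] coinc_trm[of t e e' I] by simp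
next
  case (FRel r ts)
  have "map (eval_trm I e) ts = map (eval_trm I e') ts"
    using FRel by (auto intro!: map_cong coinc_trm)
  then show ?case by (simp del: map_eq_conv)
next
  case (FConj a b)
  have "satf I R e a = satf I R e' a" "satf I R e b = satf I R e' b"
    using FConj.prems by (auto intro!: FConj.IH)
  then show ?case by simp
next
  case (FEx v \<phi>)
  have "\<And>a. satf I R (e(v:=a)) \<phi> = satf I R (e'(v:=a)) \<phi>"
    using FEx.prems by (intro FEx.IH) auto
  then show ?case by simp
qed auto

lemma finite_set_trm: "finite (set_trm t)"
  by (induction t) auto

lemma finite_set1_fm: "finite (set1_fm \<phi>)"
  by (induction \<phi>) (auto simp: finite_set_trm)

lemma finite_params: "finite (params \<phi>)"
proof -
  have "params \<phi> = Inr -` set1_fm \<phi>" by (auto simp: params_def)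
  then show ?thesis using finite_set1_fm by (simp add: finite_vimageI)
qed



primrec liftT :: "'f trm \<Rightarrow> ('f + 'a) trm" where
  "liftT (Var v) = Var v"
| "liftT (App f ts) = App (Inl f) (map liftT ts)"

primrec liftF :: "('f, 'r) fm \<Rightarrow> ('f + 'a, 'r) fm" where
  "liftF (FEq s t) = FEq (liftT s) (liftT t)"
| "liftF (FRel r ts) = FRel r (map liftT ts)"
| "liftF (FNeg \<phi>) = FNeg (liftF \<phi>)"
| "liftF (FConj \<phi> \<psi>) = FConj (liftF \<phi>) (liftF \<psi>)"
| "liftF (FEx v \<phi>) = FEx v (liftF \<phi>)"

lemma eval_liftT: "eval_trm (funU M) e (liftT t) = eval_trm (funI M) e t"
  by (induction t) (auto simp: funU_def cong: map_cong)

lemma sat_liftF: "satf (funU M) R e (liftF \<phi>) = satf (funI M) R e \<phi>"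
  by (induction \<phi> arbitrary: e) (auto simp: eval_liftT comp_def)

lemma fv_liftT: "fv_trm (liftT t) = fv_trm t"
  by (induction t) auto

lemma fv_liftF: "fv (liftF \<phi>) = fv \<phi>"
  by (induction \<phi>) (auto simp: fv_liftT)

lemma wf_liftT: "wf_trm (arF M) t \<Longrightarrow> wf_trm (arU M) (liftT t)"
  by (induction t) (auto simp: arU_def list_all_iff)

lemma wf_liftF: "wf_fm (arF M) ar \<phi> \<Longrightarrow> wf_fm (arU M) ar (liftF \<phi>)"
  by (induction \<phi>) (auto simp: wf_liftT)

lemma env_x:
  assumes "distinct xs" "length b = length xs" "i < length xs"
  shows "env xs b ys c (xs ! i) = b ! i"
  using assms by (simp add: env_def map_of_append map_of_zip_nth)

lemma env_y:
  assumes "distinct ys" "set xs \<inter> set ys = {}" "length b = length xs" "length c = length ys" "i < length ys"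
  shows "env xs b ys c (ys ! i) = c ! i"
proof -
  have "ys ! i \<notin> set xs" using assms nth_mem by blast
  then have "map_of (zip xs b) (ys ! i) = None" using assms(3)
    by (auto simp: map_of_eq_None_iff dest: set_zip_leftD)
  note N = this
  have S: "map_of (zip ys c) (ys ! i) = Some (c ! i)"
    using assms by (simp add: map_of_zip_nth)
  show ?thesis unfolding env_def map_of_append map_add_def N option.case S by simp
qed



definition TT :: "('f, 'r) fm" where "TT = FEx 0 (FEq (Var 0) (Var 0))"

fun upd :: "(nat \<Rightarrow> 'a) \<Rightarrow> nat list \<Rightarrow> 'a list \<Rightarrow> nat \<Rightarrow> 'a" where
  "upd e (y # ys) (c # cs) = upd (e(y := c)) ys cs"
| "upd e _ _ = e"

fun sbvs :: "nat list \<Rightarrow> nat list \<Rightarrow> ('f, 'r) fm \<Rightarrow> ('f, 'r) fm" where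
  "sbvs (y # ys) (w # ws) \<theta> = FEx y (FConj (FEq (Var y) (Var w)) (sbvs ys ws \<theta>))"
| "sbvs _ _ \<theta> = \<theta>"

fun sbcs :: "nat list \<Rightarrow> 'a list \<Rightarrow> ('f + 'a, 'r) fm \<Rightarrow> ('f + 'a, 'r) fm" where
  "sbcs (y # ys) (a # as) \<theta> = FEx y (FConj (FEq (Var y) (App (Inr a) [])) (sbcs ys as \<theta>))"
| "sbcs _ _ \<theta> = \<theta>"

primrec bigconj :: "('f, 'r) fm list \<Rightarrow> ('f, 'r) fm" where
  "bigconj [] = TT"
| "bigconj (\<theta> # l) = FConj \<theta> (bigconj l)"

definition bigex :: "nat list \<Rightarrow> ('f, 'r) fm \<Rightarrow> ('f, 'r) fm" where
  "bigex vs \<theta> = foldr FEx vs \<theta>"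

definition lit :: "bool \<Rightarrow> ('f, 'r) fm \<Rightarrow> ('f, 'r) fm" where
  "lit s \<theta> = (if s then \<theta> else FNeg \<theta>)"

lemma upd_other: "v \<notin> set ys \<Longrightarrow> upd e ys cs v = e v"
  by (induction e ys cs rule: upd.induct) auto

lemma upd_nth: "distinct ys \<Longrightarrow> length cs = length ys \<Longrightarrow> i < length ys \<Longrightarrow> upd e ys cs (ys ! i) = cs ! i"
proof (induction e ys cs arbitrary: i rule: upd.induct)
  case (1 e y ys c cs)
  then show ?case by (cases i) (auto simp: upd_other fun_upd_def)
qed auto

lemma map_upd: "distinct ys \<Longrightarrow> length cs = length ys \<Longrightarrow> map (upd e ys cs) ys = cs"
  by (rule nth_equalityI) (auto simp: upd_nth)

lemma sat_TT: "satf I R e TT"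
  by (simp add: TT_def)

lemma sat_sbvs: "(\<forall>y\<in>set ys. y \<notin> set ws) \<Longrightarrow> satf I R e (sbvs ys ws \<theta>) = satf I R (upd e ys (map e ws)) \<theta>"
proof (induction ys ws \<theta> arbitrary: e rule: sbvs.induct)
  case (1 y ys w ws \<theta>)
  have "map (e(y := e w)) ws = map e ws" using 1(2) by auto
  moreover have "w \<noteq> y" using 1(2) by auto
  ultimately show ?case using 1 by simp
qed auto

lemma sat_sbcs: "satf (funU M) R e (sbcs ys as \<theta>) = satf (funU M) R (upd e ys as) \<theta>"
  by (induction ys as \<theta> arbitrary: e rule: sbcs.induct) (auto simp: funU_def)

lemma sat_bigconj: "satf I R e (bigconj l) \<longleftrightarrow> (\<forall>\<theta>\<in>set l. satf I R e \<theta>)"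
  by (induction l) (auto simp: sat_TT)

lemma sat_bigex: "satf I R e (bigex vs \<theta>) \<longleftrightarrow> (\<exists>e'. (\<forall>v. v \<notin> set vs \<longrightarrow> e' v = e v) \<and> satf I R e' \<theta>)"
proof (induction vs arbitrary: e)
  case Nil
  then show ?case by (auto simp: bigex_def)
next
  case (Cons v vs)
  have "satf I R e (bigex (v # vs) \<theta>) = (\<exists>a. satf I R (e(v := a)) (bigex vs \<theta>))"
    by (simp add: bigex_def)
  also have "\<dots> = (\<exists>a e'. (\<forall>u. u \<notin> set vs \<longrightarrow> e' u = (e(v := a)) u) \<and> satf I R e' \<theta>)"
    using Cons by simp
  also have "\<dots> = (\<exists>e'. (\<forall>u. u \<notin> set (v # vs) \<longrightarrow> e' u = e u) \<and> satf I R e' \<theta>)"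
  proof
    assume "\<exists>a e'. (\<forall>u. u \<notin> set vs \<longrightarrow> e' u = (e(v := a)) u) \<and> satf I R e' \<theta>"
    then obtain a e' where "\<forall>u. u \<notin> set vs \<longrightarrow> e' u = (e(v := a)) u" "satf I R e' \<theta>" by blast
    then show "\<exists>e'. (\<forall>u. u \<notin> set (v # vs) \<longrightarrow> e' u = e u) \<and> satf I R e' \<theta>"
      by (intro exI[of _ e']) auto
  next
    assume "\<exists>e'. (\<forall>u. u \<notin> set (v # vs) \<longrightarrow> e' u = e u) \<and> satf I R e' \<theta>"
    then obtain e' where "\<forall>u. u \<notin> set (v # vs) \<longrightarrow> e' u = e u" "satf I R e' \<theta>" by blast
    then show "\<exists>a e'. (\<forall>u. u \<notin> set vs \<longrightarrow> e' u = (e(v := a)) u) \<and> satf I R e' \<theta>"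
      by (intro exI[of _ "e' v"] exI[of _ e']) auto
  qed
  finally show ?case .
qed

lemma sat_lit: "satf I R e (lit s \<theta>) = (satf I R e \<theta> = s)"
  by (simp add: lit_def)

lemma fv_TT: "fv TT = {}" by (simp add: TT_def)

lemma fv_sbvs: "length ys = length ws \<Longrightarrow> fv (sbvs ys ws \<theta>) \<subseteq> (fv \<theta> - set ys) \<union> set ws"
  by (induction ys ws \<theta> rule: sbvs.induct) auto

lemma fv_sbcs: "length ys = length as \<Longrightarrow> fv (sbcs ys as \<theta>) \<subseteq> fv \<theta> - set ys"
  by (induction ys as \<theta> rule: sbcs.induct) auto

lemma fv_bigex: "fv (bigex vs \<theta>) = fv \<theta> - set vs"
  by (induction vs) (auto simp: bigex_def)

lemma fv_bigconj: "fv (bigconj l) \<subseteq> \<Union> (fv ` set l)"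
  by (induction l) (auto simp: fv_TT)

lemma fv_lit: "fv (lit s \<theta>) = fv \<theta>" by (simp add: lit_def)

lemma wf_TT: "wf_fm af ar TT" by (simp add: TT_def)

lemma wf_sbvs: "wf_fm af ar \<theta> \<Longrightarrow> wf_fm af ar (sbvs ys ws \<theta>)"
  by (induction ys ws \<theta> rule: sbvs.induct) auto

lemma wf_sbcs: "wf_fm (arU M) ar \<theta> \<Longrightarrow> wf_fm (arU M) ar (sbcs ys as \<theta>)"
  by (induction ys as \<theta> rule: sbcs.induct) (auto simp: arU_def)

lemma wf_bigex: "wf_fm af ar \<theta> \<Longrightarrow> wf_fm af ar (bigex vs \<theta>)"
  by (induction vs) (auto simp: bigex_def)

lemma wf_bigconj: "(\<forall>\<theta>\<in>set l. wf_fm af ar \<theta>) \<Longrightarrow> wf_fm af ar (bigconj l)"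
  by (induction l) (auto simp: wf_TT)

lemma wf_lit: "wf_fm af ar (lit s \<theta>) = wf_fm af ar \<theta>" by (simp add: lit_def)



lemma div_lt_iff: "0 < (k::nat) \<Longrightarrow> i < a div k \<longleftrightarrow> Suc i * k \<le> a"
  using less_eq_div_iff_mult_less_eq[of k "Suc i" a] by (simp add: Suc_le_eq)

lemma map_nth_upt: "a + k \<le> length L \<Longrightarrow> map (nth L) [a..<a+k] = take k (drop a L)"
  by (rule nth_equalityI) auto

lemma chunk_concat: "(\<forall>c\<in>set bl. length c = k) \<Longrightarrow> i < length bl \<Longrightarrow> take k (drop (i*k) (concat bl)) = bl ! i"
proof (induction bl arbitrary: i)
  case (Cons c bl)
  then show ?case by (cases i) auto
qed auto

locale ipc =
  fixes M :: "('f, 'r, 'a) lstruct" and \<phi> :: "('f, 'r) fm" and xs ys :: "nat list"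
  assumes IP: "formula_IP M \<phi> xs ys"
begin

definition sat0 :: "'a list \<Rightarrow> 'a list \<Rightarrow> bool" where
  "sat0 b c = satL M (env xs b ys c) \<phi>"

definition chunk :: "nat \<Rightarrow> 'a list \<Rightarrow> 'a list" where
  "chunk i L = take (length ys) (drop (i * length ys) L)"

definition indepL :: "'a list \<Rightarrow> bool" where
  "indepL L \<longleftrightarrow> (\<forall>t :: nat \<Rightarrow> bool. \<exists>b. length b = length xs \<and>
      (\<forall>i < length L div length ys. sat0 b (chunk i L) = t i))"

definition Good :: "'a list \<Rightarrow> bool" where
  "Good es \<longleftrightarrow> (\<forall>N. \<exists>ds. length ds = N \<and> indepL (es @ ds))"

lemma dxs: "distinct xs" and dys: "distinct ys" and disj: "set xs \<inter> set ys = {}"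
  and fvphi: "fv \<phi> \<subseteq> set xs \<union> set ys" and wfphi: "wfL M \<phi>"
  using IP by (auto simp: formula_IP_def)

lemma IPN: "\<exists>B. B \<subseteq> {c. length c = length ys} \<and> finite B \<and> card B = N \<and>
        (\<forall>t :: 'a list \<Rightarrow> bool. \<exists>b. length b = length xs \<and> (\<forall>c\<in>B. sat0 b c = t c))"
  using IP unfolding formula_IP_def sat0_def by blast

lemma k_pos: "0 < length ys"
proof (rule ccontr)
  assume "\<not> 0 < length ys"
  then have "{c :: 'a list. length c = length ys} = {[]}" by auto
  moreover obtain B :: "'a list set" where "B \<subseteq> {c. length c = length ys}" "card B = 2"
    using IPN[of 2] by blast
  ultimately have "B \<subseteq> {[]}" by blast
  then have "card B \<le> card {[] :: 'a list}" by (intro card_mono) auto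
  then show False using \<open>card B = 2\<close> by simp
qed

lemma chunk_take: "Suc i * length ys \<le> n \<Longrightarrow> chunk i (take n L) = chunk i L"
  unfolding chunk_def by (simp add: drop_take take_take min_def)

lemma length_chunk: "Suc i * length ys \<le> length L \<Longrightarrow> length (chunk i L) = length ys"
  unfolding chunk_def by simp

lemma indepL_take: "indepL L \<Longrightarrow> indepL (take n L)"
  unfolding indepL_def
proof (intro allI)
  fix t :: "nat \<Rightarrow> bool"
  assume "\<forall>t. \<exists>b. length b = length xs \<and> (\<forall>i<length L div length ys. sat0 b (chunk i L) = t i)"
  then obtain b where b: "length b = length xs" "\<forall>i<length L div length ys. sat0 b (chunk i L) = t i" by blast
  have "\<forall>i<length (take n L) div length ys. sat0 b (chunk i (take n L)) = t i"
  proof (intro allI impI)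
    fix i assume "i < length (take n L) div length ys"
    then have "Suc i * length ys \<le> min n (length L)" using div_lt_iff[OF k_pos] by simp
    then show "sat0 b (chunk i (take n L)) = t i"
      using b(2) chunk_take div_lt_iff[OF k_pos] by simp
  qed
  then show "\<exists>b. length b = length xs \<and> (\<forall>i<length (take n L) div length ys. sat0 b (chunk i (take n L)) = t i)"
    using b(1) by blast
qed

lemma Good_nil: "Good []"
  unfolding Good_def
proof
  fix N
  from IPN[of N] obtain B where B0: "B \<subseteq> {c. length c = length ys} \<and> finite B \<and> card B = N \<and>
      (\<forall>t :: 'a list \<Rightarrow> bool. \<exists>b. length b = length xs \<and> (\<forall>c\<in>B. sat0 b c = t c))" ..
  note B = B0[THEN conjunct1] B0[THEN conjunct2, THEN conjunct1] B0[THEN conjunct2, THEN conjunct2, THEN conjunct1]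
     B0[THEN conjunct2, THEN conjunct2, THEN conjunct2]
  obtain bl where bl: "distinct bl" "set bl = B" using finite_distinct_list[OF B(2)] by blast
  have lbl: "length bl = N" using bl B(3) distinct_card by fastforce
  have lc: "\<forall>c\<in>set bl. length c = length ys" using bl B(1) by auto
  define ds0 where "ds0 = concat bl"
  have ml: "map length bl = map (\<lambda>_. length ys) bl" using lc by (intro map_cong) auto
  have lds0: "length ds0 = N * length ys"
    unfolding ds0_def length_concat ml sum_list_triv lbl by simp
  have "indepL ds0"
    unfolding indepL_def
  proof
    fix t :: "nat \<Rightarrow> bool"
    from spec[OF B(4), of "\<lambda>c. t (the_inv_into {..<N} (nth bl) c)"]
    obtain b where b: "length b = length xs" "\<forall>c\<in>B. sat0 b c = t (the_inv_into {..<N} (nth bl) c)" by blast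
    have "\<forall>i<length ds0 div length ys. sat0 b (chunk i ds0) = t i"
    proof (intro allI impI)
      fix i assume "i < length ds0 div length ys"
      then have i: "i < N" using lds0 k_pos div_lt_iff[OF k_pos, of i "N * length ys"] by (metis mult_le_cancel2 Suc_le_eq)
      then have "chunk i ds0 = bl ! i" unfolding chunk_def ds0_def
        using chunk_concat[OF lc] lbl by simp
      then show "sat0 b (chunk i ds0) = t i"
      proof -
        have "inj_on (nth bl) {..<N}" using bl(1) lbl by (intro inj_on_nth) auto
        then have "the_inv_into {..<N} (nth bl) (bl ! i) = i" using i by (intro the_inv_into_f_f) auto
        moreover have "bl ! i \<in> B" using bl(2) i lbl by auto
        ultimately show ?thesis using b(2) \<open>chunk i ds0 = bl ! i\<close> by simp
      qed
    qed
    then show "\<exists>b. length b = length xs \<and> (\<forall>i<length ds0 div length ys. sat0 b (chunk i ds0) = t i)"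
      using b(1) by blast
  qed
  then have "indepL (take N ds0)" by (rule indepL_take)
  moreover have "N \<le> N * length ys" using k_pos by (simp add: Suc_le_eq)
  then have "length (take N ds0) = N" using lds0 by simp
  ultimately show "\<exists>ds. length ds = N \<and> indepL ([] @ ds)"
    by (metis append_Nil)
qed

end


context ipc begin

definition B0 :: nat where "B0 = Suc (sum_list xs + sum_list ys)"
definition u :: "nat \<Rightarrow> nat" where "u j = B0 + j"

lemma u_notin: "u j \<notin> set xs" "u j \<notin> set ys"
proof -
  have "\<And>w. w \<in> set xs \<Longrightarrow> w < u j" "\<And>w. w \<in> set ys \<Longrightarrow> w < u j"
    using member_le_sum_list[of _ xs] member_le_sum_list[of _ ys] by (force simp: u_def B0_def)+
  then show "u j \<notin> set xs" "u j \<notin> set ys" by auto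
qed

lemma u_inj: "u i = u j \<longleftrightarrow> i = j" by (simp add: u_def)

definition P :: "('f + 'a, 'r) fm" where "P = liftF \<phi>"

definition phii :: "nat \<Rightarrow> ('f + 'a, 'r) fm" where
  "phii i = sbvs ys (map u [i * length ys..<i * length ys + length ys]) P"

definition Xt :: "bool list \<Rightarrow> ('f + 'a, 'r) fm" where
  "Xt sl = bigex xs (bigconj (map (\<lambda>i. lit (sl ! i) (phii i)) [0..<length sl]))"

definition Phi :: "nat \<Rightarrow> ('f + 'a, 'r) fm" where
  "Phi n = bigconj (map Xt (List.n_lists (n div length ys) [True, False]))"

definition psi :: "'a list \<Rightarrow> nat \<Rightarrow> ('f + 'a, 'r) fm" where
  "psi es N = sbcs (map u [0..<length es]) es
     (bigex (map u [Suc (length es)..<Suc (length es) + N]) (Phi (Suc (length es) + N)))"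

lemma phii_sem:
  assumes L: "\<forall>j<length L. e (u j) = L ! j" and i: "Suc i * length ys \<le> length L"
  shows "satU M e (phii i) = sat0 (map e xs) (chunk i L)"
proof -
  let ?k = "length ys"
  let ?ws = "map u [i * ?k..<i * ?k + ?k]"
  have nin: "\<forall>y\<in>set ys. y \<notin> set ?ws" using u_notin by auto
  have "map e ?ws = map (nth L) [i * ?k..<i * ?k + ?k]"
    using L i by (auto intro!: map_cong)
  also have "\<dots> = chunk i L" unfolding chunk_def using i by (intro map_nth_upt) simp
  finally have mw: "map e ?ws = chunk i L" .
  have lc: "length (chunk i L) = ?k" using length_chunk[OF i] .
  have "satU M e (phii i) = satf (funU M) (relI M) (upd e ys (chunk i L)) P"
    unfolding satU_def phii_def sat_sbvs[OF nin] mw ..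
  also have "\<dots> = satf (funI M) (relI M) (upd e ys (chunk i L)) \<phi>" by (simp add: P_def sat_liftF)
  also have "\<dots> = satf (funI M) (relI M) (env xs (map e xs) ys (chunk i L)) \<phi>"
  proof (rule coinc, intro ballI)
    fix v assume "v \<in> fv \<phi>"
    then have v: "v \<in> set xs \<or> v \<in> set ys" using fvphi by auto
    show "upd e ys (chunk i L) v = env xs (map e xs) ys (chunk i L) v"
    proof (cases "v \<in> set ys")
      case True
      then obtain j where j: "j < ?k" "v = ys ! j" by (auto simp: in_set_conv_nth)
      show ?thesis using upd_nth[OF dys lc j(1)] env_y[OF dys disj _ lc j(1), of "map e xs"] j(2) by simp
    next
      case False
      then have "v \<in> set xs" using v by auto
      then obtain j where j: "j < length xs" "v = xs ! j" by (auto simp: in_set_conv_nth)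
      show ?thesis using upd_other[OF False] env_x[OF dxs _ j(1), of "map e xs"] j by simp
    qed
  qed
  finally show ?thesis by (simp add: sat0_def satL_def)
qed

lemma Xt_sem:
  assumes L: "\<forall>j<length L. e (u j) = L ! j" and sl: "length sl = length L div length ys"
  shows "satU M e (Xt sl) = (\<exists>b. length b = length xs \<and> (\<forall>i<length sl. sat0 b (chunk i L) = sl ! i))"
proof -
  have key: "satU M e' (phii i) = sat0 (map e' xs) (chunk i L)"
    if "\<forall>v. v \<notin> set xs \<longrightarrow> e' v = e v" "i < length sl" for e' i
  proof (rule phii_sem)
    show "\<forall>j<length L. e' (u j) = L ! j" using that(1) L u_notin by simp
    show "Suc i * length ys \<le> length L" using that(2) sl div_lt_iff[OF k_pos] by simp
  qed
  have "satU M e (Xt sl) = (\<exists>e'. (\<forall>v. v \<notin> set xs \<longrightarrow> e' v = e v) \<and>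
          (\<forall>i<length sl. satU M e' (phii i) = sl ! i))"
  proof -
    have h: "\<And>e'. (\<forall>\<theta>\<in>set (map (\<lambda>i. lit (sl ! i) (phii i)) [0..<length sl]). satf (funU M) (relI M) e' \<theta>)
       = (\<forall>i<length sl. satf (funU M) (relI M) e' (phii i) = sl ! i)"
      by (auto simp: sat_lit)
    show ?thesis unfolding Xt_def satU_def sat_bigex sat_bigconj h ..
  qed
  also have "\<dots> = (\<exists>b. length b = length xs \<and> (\<forall>i<length sl. sat0 b (chunk i L) = sl ! i))"
  proof
    assume "\<exists>e'. (\<forall>v. v \<notin> set xs \<longrightarrow> e' v = e v) \<and> (\<forall>i<length sl. satU M e' (phii i) = sl ! i)"
    then obtain e' where e': "\<forall>v. v \<notin> set xs \<longrightarrow> e' v = e v" "\<forall>i<length sl. satU M e' (phii i) = sl ! i"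
      by blast
    then show "\<exists>b. length b = length xs \<and> (\<forall>i<length sl. sat0 b (chunk i L) = sl ! i)"
      using key[OF e'(1)] by (intro exI[of _ "map e' xs"]) auto
  next
    assume "\<exists>b. length b = length xs \<and> (\<forall>i<length sl. sat0 b (chunk i L) = sl ! i)"
    then obtain b where b: "length b = length xs" "\<forall>i<length sl. sat0 b (chunk i L) = sl ! i" by blast
    define e' where "e' = upd e xs b"
    have e'1: "\<forall>v. v \<notin> set xs \<longrightarrow> e' v = e v" by (simp add: e'_def upd_other)
    have e'2: "map e' xs = b" unfolding e'_def using map_upd[OF dxs b(1)] by simp
    show "\<exists>e'. (\<forall>v. v \<notin> set xs \<longrightarrow> e' v = e v) \<and> (\<forall>i<length sl. satU M e' (phii i) = sl ! i)"
      using key[OF e'1] e'2 b(2) e'1 by (intro exI[of _ e']) auto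
  qed
  finally show ?thesis .
qed

lemma Phi_sem:
  assumes L: "\<forall>j<length L. e (u j) = L ! j" and n: "length L = n"
  shows "satU M e (Phi n) = indepL L"
proof -
  let ?m = "length L div length ys"
  have "satU M e (Phi n) = (\<forall>sl. length sl = ?m \<longrightarrow> satU M e (Xt sl))"
    unfolding Phi_def satU_def sat_bigconj using n by (auto simp: set_n_lists)
  also have "\<dots> = (\<forall>sl. length sl = ?m \<longrightarrow>
      (\<exists>b. length b = length xs \<and> (\<forall>i<length sl. sat0 b (chunk i L) = sl ! i)))"
    using Xt_sem[OF L] by auto
  also have "\<dots> = indepL L"
    unfolding indepL_def
  proof
    assume H: "\<forall>sl. length sl = ?m \<longrightarrow> (\<exists>b. length b = length xs \<and> (\<forall>i<length sl. sat0 b (chunk i L) = sl ! i))"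
    show "\<forall>t. \<exists>b. length b = length xs \<and> (\<forall>i<?m. sat0 b (chunk i L) = t i)"
    proof
      fix t :: "nat \<Rightarrow> bool"
      have "length (map t [0..<?m]) = ?m" by simp
      from H[rule_format, OF this] obtain b where
        b: "length b = length xs" "\<forall>i<length (map t [0..<?m]). sat0 b (chunk i L) = map t [0..<?m] ! i"
        by blast
      show "\<exists>b. length b = length xs \<and> (\<forall>i<?m. sat0 b (chunk i L) = t i)"
        using b by (intro exI[of _ b]) simp
    qed
  next
    assume H: "\<forall>t. \<exists>b. length b = length xs \<and> (\<forall>i<?m. sat0 b (chunk i L) = t i)"
    show "\<forall>sl. length sl = ?m \<longrightarrow> (\<exists>b. length b = length xs \<and> (\<forall>i<length sl. sat0 b (chunk i L) = sl ! i))"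
    proof (intro allI impI)
      fix sl :: "bool list" assume sl: "length sl = ?m"
      from H obtain b where b: "length b = length xs" "\<forall>i<?m. sat0 b (chunk i L) = sl ! i" by blast
      show "\<exists>b. length b = length xs \<and> (\<forall>i<length sl. sat0 b (chunk i L) = sl ! i)"
        using b sl by (intro exI[of _ b]) simp
    qed
  qed
  finally show ?thesis .
qed

end


context ipc begin

lemma layout:
  assumes "\<forall>v. v \<notin> set (map u [Suc (length es)..<Suc (length es) + N]) \<longrightarrow> e'' v = upd e (map u [0..<length es]) es v"
  shows "\<forall>j<length (es @ e (u (length es)) # map e'' (map u [Suc (length es)..<Suc (length es) + N])).
           e'' (u j) = (es @ e (u (length es)) # map e'' (map u [Suc (length es)..<Suc (length es) + N])) ! j"
proof (intro allI impI)
  fix j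
  let ?les = "length es"
  let ?dv = "map u [Suc ?les..<Suc ?les + N]"
  let ?us = "map u [0..<?les]"
  assume j: "j < length (es @ e (u ?les) # map e'' ?dv)"
  have dus: "distinct ?us" by (simp add: distinct_map inj_on_def u_inj)
  consider "j < ?les" | "j = ?les" | "?les < j" by linarith
  then show "e'' (u j) = (es @ e (u ?les) # map e'' ?dv) ! j"
  proof cases
    case 1
    have "u j \<notin> set ?dv" using 1 by (auto simp: u_inj)
    then have "e'' (u j) = upd e ?us es (u j)" using assms by blast
    also have "\<dots> = upd e ?us es (?us ! j)" using 1 by simp
    also have "\<dots> = es ! j" using 1 by (intro upd_nth[OF dus]) auto
    finally show ?thesis using 1 by (simp add: nth_append)
  next
    case 2
    have a: "u j \<notin> set ?dv" "u j \<notin> set ?us" using 2 by (auto simp: u_inj)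
    have "e'' (u j) = upd e ?us es (u j)" using assms a(1) by blast
    also have "\<dots> = e (u j)" using a(2) by (rule upd_other)
    finally show ?thesis using 2 by (simp add: nth_append)
  next
    case 3
    have "length ?dv = N" by simp
    then have "j - Suc ?les < N" using j 3 by (simp del: upt_Suc)
    moreover have "(es @ e (u ?les) # map e'' ?dv) ! j = map e'' ?dv ! (j - Suc ?les)"
      using 3 by (simp add: nth_append nth_Cons' del: upt_Suc)
    ultimately show ?thesis using 3 by (simp del: upt_Suc)
  qed
qed

lemma psi_sem: "satU M e (psi es N) = (\<exists>ds. length ds = N \<and> indepL (es @ e (u (length es)) # ds))"
proof -
  let ?les = "length es"
  let ?dv = "map u [Suc ?les..<Suc ?les + N]"
  let ?us = "map u [0..<?les]"
  let ?n = "Suc ?les + N"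
  have ddv: "distinct ?dv" by (simp add: distinct_map inj_on_def u_inj)
  have "satU M e (psi es N) = (\<exists>e''. (\<forall>v. v \<notin> set ?dv \<longrightarrow> e'' v = upd e ?us es v) \<and> satU M e'' (Phi ?n))"
    unfolding psi_def satU_def sat_sbcs sat_bigex ..
  also have "\<dots> = (\<exists>ds. length ds = N \<and> indepL (es @ e (u ?les) # ds))"
  proof
    assume "\<exists>e''. (\<forall>v. v \<notin> set ?dv \<longrightarrow> e'' v = upd e ?us es v) \<and> satU M e'' (Phi ?n)"
    then obtain e'' where e'': "\<forall>v. v \<notin> set ?dv \<longrightarrow> e'' v = upd e ?us es v" "satU M e'' (Phi ?n)" by blast
    have "satU M e'' (Phi ?n) = indepL (es @ e (u ?les) # map e'' ?dv)"
      by (rule Phi_sem[OF layout[OF e''(1)]]) simp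
    then show "\<exists>ds. length ds = N \<and> indepL (es @ e (u ?les) # ds)"
      using e''(2) by (intro exI[of _ "map e'' ?dv"]) simp
  next
    assume "\<exists>ds. length ds = N \<and> indepL (es @ e (u ?les) # ds)"
    then obtain ds where ds: "length ds = N" "indepL (es @ e (u ?les) # ds)" by blast
    define e'' where "e'' = upd (upd e ?us es) ?dv ds"
    have e1: "\<forall>v. v \<notin> set ?dv \<longrightarrow> e'' v = upd e ?us es v" by (simp add: e''_def upd_other)
    have e2: "map e'' ?dv = ds" unfolding e''_def using ds(1) by (intro map_upd[OF ddv]) simp
    have "satU M e'' (Phi ?n) = indepL (es @ e (u ?les) # map e'' ?dv)"
      by (rule Phi_sem[OF layout[OF e1]]) simp
    then show "\<exists>e''. (\<forall>v. v \<notin> set ?dv \<longrightarrow> e'' v = upd e ?us es v) \<and> satU M e'' (Phi ?n)"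
      using e1 e2 ds(2) by (intro exI[of _ e'']) simp
  qed
  finally show ?thesis .
qed

lemma fv_phii: "fv (phii i) \<subseteq> set xs \<union> u ` {i * length ys..<i * length ys + length ys}"
proof -
  have "fv (phii i) \<subseteq> (fv P - set ys) \<union> set (map u [i * length ys..<i * length ys + length ys])"
    unfolding phii_def by (rule fv_sbvs) simp
  then show ?thesis using fvphi by (auto simp: P_def fv_liftF)
qed

lemma fv_Xt: "fv (Xt sl) \<subseteq> u ` {..<length sl * length ys}"
proof
  fix v assume "v \<in> fv (Xt sl)"
  then have "v \<in> fv (bigconj (map (\<lambda>i. lit (sl ! i) (phii i)) [0..<length sl]))" "v \<notin> set xs"
    unfolding Xt_def fv_bigex by auto
  then have "v \<in> \<Union> (fv ` set (map (\<lambda>i. lit (sl ! i) (phii i)) [0..<length sl]))" "v \<notin> set xs"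
    using fv_bigconj by blast+
  then obtain i where i: "i < length sl" "v \<in> fv (lit (sl ! i) (phii i))" "v \<notin> set xs" by auto
  then have i: "i < length sl" "v \<in> fv (phii i)" "v \<notin> set xs" by (auto simp: fv_lit)
  then have "v \<in> u ` {i * length ys..<i * length ys + length ys}" using fv_phii[of i] by blast
  then obtain j where j: "v = u j" "i * length ys \<le> j" "j < i * length ys + length ys" by auto
  have "Suc i * length ys \<le> length sl * length ys"
    using i(1) by (intro mult_le_mono1) simp
  then have "i * length ys + length ys \<le> length sl * length ys" by simp
  then show "v \<in> u ` {..<length sl * length ys}" using j by auto
qed

lemma fv_Phi: "fv (Phi n) \<subseteq> u ` {..<n}"
proof
  fix v assume "v \<in> fv (Phi n)"
  then have "v \<in> \<Union> (fv ` set (map Xt (List.n_lists (n div length ys) [True, False])))"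
    unfolding Phi_def using fv_bigconj by blast
  then obtain sl where sl: "sl \<in> set (List.n_lists (n div length ys) [True, False])" "v \<in> fv (Xt sl)"
    by auto
  then have "length sl = n div length ys" by (simp add: set_n_lists)
  then have "length sl * length ys \<le> n" by (simp add: div_times_less_eq_dividend)
  then have "u ` {..<length sl * length ys} \<subseteq> u ` {..<n}" by (intro image_mono) auto
  moreover have "v \<in> u ` {..<length sl * length ys}" using fv_Xt sl(2) by blast
  ultimately show "v \<in> u ` {..<n}" by blast
qed

lemma u_img: "u j \<in> u ` A \<longleftrightarrow> j \<in> A" by (auto simp: u_def)

lemma fv_psi: "fv (psi es N) \<subseteq> {u (length es)}"
proof
  fix v
  let ?les = "length es"
  assume v: "v \<in> fv (psi es N)"
  let ?dv = "map u [Suc ?les..<Suc ?les + N]"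
  let ?us = "map u [0..<?les]"
  have H: "fv (psi es N) \<subseteq> (fv (Phi (Suc ?les + N)) - set ?dv) - set ?us"
    unfolding psi_def using fv_sbcs[of ?us es "bigex ?dv (Phi (Suc ?les + N))"] unfolding fv_bigex by simp
  have s1: "set ?dv = u ` {Suc ?les..<Suc ?les + N}" by (simp only: set_map set_upt)
  have s2: "set ?us = u ` {0..<?les}" by (simp only: set_map set_upt)
  have "v \<in> fv (Phi (Suc ?les + N))" "v \<notin> set ?dv" "v \<notin> set ?us"
    using v H by blast+
  then have "v \<in> fv (Phi (Suc ?les + N))" "v \<notin> u ` {Suc ?les..<Suc ?les + N}" "v \<notin> u ` {0..<?les}"
    unfolding s1 s2 by blast+
  moreover obtain j where "v = u j" "j < Suc ?les + N"
    using fv_Phi calculation(1) by blast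
  ultimately have "j \<notin> {Suc ?les..<Suc ?les + N}" "j \<notin> {0..<?les}" "j < Suc ?les + N" "v = u j"
    by (simp_all add: u_img)
  then have "j = ?les" by simp
  then show "v \<in> {u ?les}" using \<open>v = u j\<close> by simp
qed

lemma wf_psi: "wfU M (psi es N)"
proof -
  have "wf_fm (arU M) (arR M) P" using wfphi by (simp add: P_def wfL_def wf_liftF)
  then have "wf_fm (arU M) (arR M) (phii i)" for i by (simp add: phii_def wf_sbvs)
  then have "wf_fm (arU M) (arR M) (Xt sl)" for sl
    by (simp add: Xt_def wf_bigex wf_bigconj wf_lit)
  then have "wf_fm (arU M) (arR M) (Phi n)" for n
    by (simp add: Phi_def wf_bigconj)
  then show ?thesis unfolding wfU_def psi_def by (intro wf_sbcs wf_bigex)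
qed

end


context ipc begin

lemma Good_step:
  assumes sat: "aleph1_saturated M" and G: "Good es"
  shows "\<exists>a. Good (es @ [a])"
proof -
  let ?v = "u (length es)"
  let ?S = "range (psi es)"
  let ?A = "\<Union>N. params (psi es N)"
  have cA: "countable ?A" by (intro countable_UN) (auto intro: countable_finite finite_params)
  have props: "\<forall>\<theta>\<in>?S. wfU M \<theta> \<and> fv \<theta> \<subseteq> {?v} \<and> params \<theta> \<subseteq> ?A"
    using wf_psi fv_psi by blast
  have fs: "\<forall>F\<subseteq>?S. finite F \<longrightarrow> (\<exists>a. \<forall>\<theta>\<in>F. satU M (\<lambda>_. a) \<theta>)"
  proof (intro allI impI)
    fix F assume F: "F \<subseteq> ?S" "finite F"
    obtain C where C: "finite C" "F = psi es ` C"
      using finite_subset_image[of F "psi es" UNIV] F by auto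
    define Nm where "Nm = Max (insert 0 C)"
    obtain ds where ds: "length ds = Suc Nm" "indepL (es @ ds)" using G unfolding Good_def by blast
    then obtain a ds' where dsa: "ds = a # ds'" by (cases ds) auto
    show "\<exists>a. \<forall>\<theta>\<in>F. satU M (\<lambda>_. a) \<theta>"
    proof (intro exI[of _ a] ballI)
      fix \<theta> assume "\<theta> \<in> F"
      then obtain N where N: "N \<in> C" "\<theta> = psi es N" using C by auto
      have "N \<le> Nm" unfolding Nm_def using N(1) C(1) by (intro Max_ge) auto
      have eq: "es @ a # take N ds' = take (Suc (length es) + N) (es @ ds)" using dsa by simp
      have "indepL (es @ a # take N ds')" unfolding eq by (rule indepL_take[OF ds(2)])
      moreover have "length (take N ds') = N" using ds(1) dsa \<open>N \<le> Nm\<close> by simp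
      ultimately show "satU M (\<lambda>_. a) \<theta>" unfolding N(2) psi_sem by blast
    qed
  qed
  have "\<exists>a. \<forall>\<theta>\<in>?S. satU M (\<lambda>_. a) \<theta>"
    using sat unfolding aleph1_saturated_def using cA props fs by blast
  then obtain a where a: "\<forall>\<theta>\<in>?S. satU M (\<lambda>_. a) \<theta>" by blast
  have "Good (es @ [a])" unfolding Good_def
  proof
    fix N
    from a have "satU M (\<lambda>_. a) (psi es N)" by auto
    then obtain ds where "length ds = N" "indepL (es @ a # ds)" unfolding psi_sem by auto
    then show "\<exists>ds. length ds = N \<and> indepL ((es @ [a]) @ ds)" by auto
  qed
  then show ?thesis ..
qed

primrec gseq :: "nat \<Rightarrow> 'a list" where
  "gseq 0 = []"
| "gseq (Suc m) = gseq m @ [SOME a. Good (gseq m @ [a])]"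

lemma gseq_Good: "aleph1_saturated M \<Longrightarrow> Good (gseq m)"
proof (induction m)
  case 0 then show ?case by (simp add: Good_nil)
next
  case (Suc m)
  then show ?case using someI_ex[OF Good_step[OF Suc.prems Suc.IH]] by simp
qed

lemma gseq_len: "length (gseq m) = m"
  by (induction m) auto

lemma gseq_prefix: "m \<le> n \<Longrightarrow> take m (gseq n) = gseq m"
proof (induction n)
  case 0 then show ?case by simp
next
  case (Suc n)
  show ?case
  proof (cases "m = Suc n")
    case True then show ?thesis using gseq_len[of "Suc n"] by simp
  next
    case False
    then have "m \<le> n" using Suc.prems by simp
    then show ?thesis using Suc.IH gseq_len[of n] by simp
  qed
qed

definition cseq :: "nat \<Rightarrow> 'a list" where
  "cseq i = chunk i (gseq (Suc i * length ys))"

lemma length_cseq: "length (cseq i) = length ys"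
  unfolding cseq_def by (rule length_chunk) (simp add: gseq_len)

lemma indep_c:
  assumes sat: "aleph1_saturated M"
  shows "\<exists>b. length b = length xs \<and> (\<forall>i<m. sat0 b (cseq i) = t i)"
proof -
  have "Good (gseq (m * length ys))" using gseq_Good[OF sat] .
  then obtain ds where "length ds = 0" "indepL (gseq (m * length ys) @ ds)" unfolding Good_def by blast
  then have I: "indepL (gseq (m * length ys))" by simp
  have ch: "chunk i (gseq (m * length ys)) = cseq i" if "i < m" for i
  proof -
    have le: "Suc i * length ys \<le> m * length ys" using that by (intro mult_le_mono1) simp
    have "chunk i (gseq (m * length ys)) = chunk i (take (Suc i * length ys) (gseq (m * length ys)))"
      by (rule chunk_take[symmetric]) simp
    also have "\<dots> = cseq i" unfolding cseq_def using gseq_prefix[OF le] by simp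
    finally show ?thesis .
  qed
  from I obtain b where b: "length b = length xs" "\<forall>i<length (gseq (m * length ys)) div length ys. sat0 b (chunk i (gseq (m * length ys))) = t i"
    unfolding indepL_def by blast
  have "length (gseq (m * length ys)) div length ys = m" using k_pos by (simp add: gseq_len)
  then show ?thesis using b ch by (intro exI[of _ b]) auto
qed

definition pp :: "('f, 'r, 'a) pfm" where "pp = (P, ys)"

lemma inst_pp: "inst M xs pp c b = sat0 b c"
  by (simp add: inst_def pp_def satU_def P_def sat_liftF sat0_def satL_def)

definition XX :: "('a list \<Rightarrow> bool) set set" where
  "XX = {\<pi>. consistent xs \<pi> \<and> (\<exists>m. \<forall>q\<in>\<pi>. \<forall>b b'. (\<forall>i<m. sat0 b (cseq i) = sat0 b' (cseq i)) \<longrightarrow> q b = q b')}"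

lemma XX_step:
  assumes sat: "aleph1_saturated M"
  shows "XX \<subseteq> opR_step M n xs {pp} XX"
proof
  fix \<pi> assume "\<pi> \<in> XX"
  then obtain m where cons: "consistent xs \<pi>"
    and dep: "\<forall>q\<in>\<pi>. \<forall>b b'. (\<forall>i<m. sat0 b (cseq i) = sat0 b' (cseq i)) \<longrightarrow> q b = q b'"
    unfolding XX_def by blast
  let ?ps = "\<lambda>i::nat. pp"
  let ?cs = "\<lambda>i. cseq (m + i)"
  have A: "\<forall>i<n. ?ps i \<in> {pp} \<and> length (?cs i) = length (snd (?ps i))"
    by (simp add: pp_def length_cseq)
  have B: "\<pi> \<union> {\<lambda>b. \<forall>i<n. inst M xs (?ps i) (?cs i) b = \<sigma> i} \<in> XX" for \<sigma>
  proof -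
    let ?q = "\<lambda>b. \<forall>i<n. inst M xs (?ps i) (?cs i) b = \<sigma> i"
    have dep2: "\<forall>q\<in>\<pi> \<union> {?q}. \<forall>b b'. (\<forall>i<m + n. sat0 b (cseq i) = sat0 b' (cseq i)) \<longrightarrow> q b = q b'"
    proof (intro ballI allI impI)
      fix q b b' assume q: "q \<in> \<pi> \<union> {?q}" and bb: "\<forall>i<m + n. sat0 b (cseq i) = sat0 b' (cseq i)"
      show "q b = q b'"
      proof (cases "q \<in> \<pi>")
        case True then show ?thesis using dep bb by auto
      next
        case False
        then have "q = ?q" using q by blast
        then show ?thesis using bb by (simp add: inst_pp)
      qed
    qed
    have "consistent xs (\<pi> \<union> {?q})"
      unfolding consistent_def
    proof (intro allI impI)
      fix F assume F: "F \<subseteq> \<pi> \<union> {?q}" "finite F"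
      have "F - {?q} \<subseteq> \<pi>" "finite (F - {?q})" using F by auto
      then obtain b0 where b0: "length b0 = length xs" "\<forall>p\<in>F - {?q}. p b0"
        using cons unfolding consistent_def by blast
      define t where "t i = (if i < m then sat0 b0 (cseq i) else \<sigma> (i - m))" for i
      obtain b1 where b1: "length b1 = length xs" "\<forall>i<m + n. sat0 b1 (cseq i) = t i"
        using indep_c[OF sat] by blast
      have "\<forall>p\<in>F. p b1"
      proof
        fix p assume "p \<in> F"
        show "p b1"
        proof (cases "p = ?q")
          case True
          have "\<forall>i<n. sat0 b1 (cseq (m + i)) = \<sigma> i" using b1(2) by (simp add: t_def)
          then show ?thesis using True by (simp add: inst_pp)
        next
          case False
          then have "p \<in> \<pi>" "p b0" using F \<open>p \<in> F\<close> b0(2) by auto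
          moreover have "\<forall>i<m. sat0 b1 (cseq i) = sat0 b0 (cseq i)" using b1(2) by (simp add: t_def)
          ultimately show ?thesis using dep by blast
        qed
      qed
      then show "\<exists>b. length b = length xs \<and> (\<forall>p\<in>F. p b)" using b1(1) by blast
    qed
    then show ?thesis unfolding XX_def using dep2 by blast
  qed
  show "\<pi> \<in> opR_step M n xs {pp} XX"
    unfolding opR_step_def using cons A B
    by (intro CollectI conjI exI[of _ ?ps] exI[of _ ?cs]) blast+
qed

lemma top_XX:
  assumes sat: "aleph1_saturated M"
  shows "{\<lambda>b. True} \<in> XX"
proof -
  obtain b :: "'a list" where "length b = length xs" using indep_c[OF sat, of 0 "\<lambda>_. True"] by blast
  note lb = this
  have "consistent xs {\<lambda>b :: 'a list. True}" unfolding consistent_def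
    using lb by (intro allI impI) (rule exI[of _ b], auto)
  then show ?thesis unfolding XX_def by auto
qed

lemma opR_all:
  assumes sat: "aleph1_saturated M"
  shows "opR_inf M n xs {pp} {\<lambda>b. True}"
proof -
  have "XX \<subseteq> gfp (opR_step M n xs {pp})" by (rule gfp_upperbound) (rule XX_step[OF sat])
  then show ?thesis unfolding opR_inf_def using top_XX[OF sat] by blast
qed

lemma forward:
  assumes sat: "aleph1_saturated M"
  shows "\<exists>(xs' :: nat list) (\<Delta> :: ('f, 'r, 'a) pfm set).
       distinct xs' \<and> finite \<Delta> \<and> (\<forall>p\<in>\<Delta>. ok_pfm M xs' p) \<and>
       opD M xs' \<Delta> {\<lambda>b. True} = \<infinity>"
proof (intro exI conjI)
  show "distinct xs" by (rule dxs)
  show "finite {pp}" by simp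
  show "\<forall>p\<in>{pp}. ok_pfm M xs p"
    using dys disj fvphi wfphi
    by (auto simp: ok_pfm_def pp_def P_def wfU_def wfL_def wf_liftF fv_liftF)
  have ub: "enat (Suc N) \<le> opD M xs {pp} {\<lambda>b. True}" for N
    unfolding opD_def using opR_all[OF sat, of "Suc N"] by (intro Sup_upper) auto
  show "opD M xs {pp} {\<lambda>b. True} = \<infinity>"
  proof (cases "opD M xs {pp} {\<lambda>b. True}")
    case (enat m)
    then show ?thesis using ub[of m] by simp
  qed simp
qed

end


primrec bvars :: "('f, 'r) fm \<Rightarrow> nat set" where
  "bvars (FEq s t) = {}"
| "bvars (FRel r ts) = {}"
| "bvars (FNeg \<phi>) = bvars \<phi>"
| "bvars (FConj \<phi> \<psi>) = bvars \<phi> \<union> bvars \<psi>"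
| "bvars (FEx v \<phi>) = insert v (bvars \<phi>)"

lemma finite_bvars: "finite (bvars \<phi>)"
  by (induction \<phi>) auto

primrec elimT :: "('a \<Rightarrow> nat) \<Rightarrow> ('f + 'a) trm \<Rightarrow> 'f trm" where
  "elimT z (Var v) = Var v"
| "elimT z (App s ts) = (case s of Inl f \<Rightarrow> App f (map (elimT z) ts) | Inr a \<Rightarrow> Var (z a))"

primrec elimF :: "('a \<Rightarrow> nat) \<Rightarrow> ('f + 'a, 'r) fm \<Rightarrow> ('f, 'r) fm" where
  "elimF z (FEq s t) = FEq (elimT z s) (elimT z t)"
| "elimF z (FRel r ts) = FRel r (map (elimT z) ts)"
| "elimF z (FNeg \<phi>) = FNeg (elimF z \<phi>)"
| "elimF z (FConj \<phi> \<psi>) = FConj (elimF z \<phi>) (elimF z \<psi>)"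
| "elimF z (FEx v \<phi>) = FEx v (elimF z \<phi>)"

lemma eval_elimT:
  "(\<forall>v\<in>fv_trm t. e' v = e v) \<Longrightarrow> (\<forall>a. Inr a \<in> set_trm t \<longrightarrow> e' (z a) = a) \<Longrightarrow>
   eval_trm (funI M) e' (elimT z t) = eval_trm (funU M) e t"
proof (induction t)
  case (Var v) then show ?case by simp
next
  case (App s ts)
  show ?case
  proof (cases s)
    case (Inl f)
    have "map (eval_trm (funI M) e' \<circ> elimT z) ts = map (eval_trm (funU M) e) ts"
    proof (rule map_cong)
      fix t assume t: "t \<in> set ts"
      show "(eval_trm (funI M) e' \<circ> elimT z) t = eval_trm (funU M) e t"
        using App.IH[OF t] App.prems t by auto
    qed simp
    moreover have "funU M (Inl f) = funI M f" by (simp add: funU_def)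
    ultimately show ?thesis using Inl by (simp del: map_eq_conv)
  next
    case (Inr a)
    then show ?thesis using App.prems by (simp add: funU_def)
  qed
qed

lemma sat_elimF:
  "(\<forall>v\<in>fv \<phi>. e' v = e v) \<Longrightarrow> (\<forall>a. Inr a \<in> set1_fm \<phi> \<longrightarrow> e' (z a) = a) \<Longrightarrow>
   (\<forall>v\<in>bvars \<phi>. \<forall>a. Inr a \<in> set1_fm \<phi> \<longrightarrow> z a \<noteq> v) \<Longrightarrow>
   satf (funI M) R e' (elimF z \<phi>) = satf (funU M) R e \<phi>"
proof (induction \<phi> arbitrary: e e')
  case (FEq s t)
  then show ?case using eval_elimT[of s e' e z M] eval_elimT[of t e' e z M] by simp
next
  case (FRel r ts)
  have "map (eval_trm (funI M) e' \<circ> elimT z) ts = map (eval_trm (funU M) e) ts"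
  proof (rule map_cong)
    fix t assume t: "t \<in> set ts"
    show "(eval_trm (funI M) e' \<circ> elimT z) t = eval_trm (funU M) e t"
      using eval_elimT[of t e' e z M] FRel.prems t by auto
  qed simp
  then show ?case by (simp del: map_eq_conv)
next
  case (FNeg \<phi>)
  then show ?case by simp
next
  case (FConj \<phi> \<psi>)
  have "satf (funI M) R e' (elimF z \<phi>) = satf (funU M) R e \<phi>"
    using FConj.prems by (intro FConj.IH(1)) auto
  moreover have "satf (funI M) R e' (elimF z \<psi>) = satf (funU M) R e \<psi>"
    using FConj.prems by (intro FConj.IH(2)) auto
  ultimately show ?case by simp
next
  case (FEx v \<phi>)
  have "satf (funI M) R (e'(v := x)) (elimF z \<phi>) = satf (funU M) R (e(v := x)) \<phi>" for x
    using FEx.prems by (intro FEx.IH) auto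
  then show ?case by simp
qed

lemma fv_elimT: "fv_trm (elimT z t) \<subseteq> fv_trm t \<union> z ` {a. Inr a \<in> set_trm t}"
proof (induction t)
  case (App s ts)
  then show ?case by (cases s) fastforce+
qed simp

lemma fv_elimF: "fv (elimF z \<phi>) \<subseteq> fv \<phi> \<union> z ` {a. Inr a \<in> set1_fm \<phi>}"
proof (induction \<phi>)
  case (FEq s t)
  then show ?case using fv_elimT[of z s] fv_elimT[of z t] by auto
next
  case (FRel r ts)
  then show ?case using fv_elimT[of z] by fastforce
qed auto

lemma wf_elimT: "wf_trm (arU M) t \<Longrightarrow> wf_trm (arF M) (elimT z t)"
proof (induction t)
  case (App s ts)
  then show ?case by (cases s) (auto simp: arU_def list_all_iff)
qed simp

lemma wf_elimF: "wf_fm (arU M) ar \<phi> \<Longrightarrow> wf_fm (arF M) ar (elimF z \<phi>)"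
  by (induction \<phi>) (auto simp: wf_elimT)



definition Wp :: "('f, 'r, 'a) lstruct \<Rightarrow> nat list \<Rightarrow> ('f, 'r, 'a) pfm \<Rightarrow> nat \<Rightarrow> bool" where
  "Wp M xs p N \<longleftrightarrow> (\<exists>cs :: nat \<Rightarrow> 'a list. (\<forall>i<N. length (cs i) = length (snd p)) \<and>
     (\<forall>\<sigma> :: nat \<Rightarrow> bool. \<exists>b. length b = length xs \<and> (\<forall>i<N. inst M xs p (cs i) b = \<sigma> i)))"

lemma Wp_mono:
  assumes "Wp M xs p N" "N' \<le> N" shows "Wp M xs p N'"
proof -
  obtain cs where cs: "\<forall>i<N. length (cs i) = length (snd p)"
     "\<forall>\<sigma> :: nat \<Rightarrow> bool. \<exists>b. length b = length xs \<and> (\<forall>i<N. inst M xs p (cs i) b = \<sigma> i)"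
    using assms(1) unfolding Wp_def by blast
  have "\<forall>i<N'. length (cs i) = length (snd p)" using cs(1) assms(2) by simp
  moreover have "\<forall>\<sigma> :: nat \<Rightarrow> bool. \<exists>b. length b = length xs \<and> (\<forall>i<N'. inst M xs p (cs i) b = \<sigma> i)"
  proof
    fix \<sigma> :: "nat \<Rightarrow> bool"
    from cs(2) obtain b where "length b = length xs" "\<forall>i<N. inst M xs p (cs i) b = \<sigma> i" by blast
    then show "\<exists>b. length b = length xs \<and> (\<forall>i<N'. inst M xs p (cs i) b = \<sigma> i)"
      using assms(2) by (intro exI[of _ b]) simp
  qed
  ultimately show ?thesis unfolding Wp_def by blast
qed

lemma opR_inf_split:
  assumes "opR_inf M n xs \<Delta> \<pi>"
  shows "\<exists>ps cs. (\<forall>i<n. ps i \<in> \<Delta> \<and> length (cs i) = length (snd (ps i))) \<and>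
          (\<forall>\<sigma>::nat\<Rightarrow>bool. \<exists>b. length b = length xs \<and> (\<forall>i<n. inst M xs (ps i) (cs i) b = \<sigma> i))"
proof -
  have "\<pi> \<in> \<Union> {u. u \<subseteq> opR_step M n xs \<Delta> u}"
    using assms unfolding opR_inf_def gfp_def by simp
  then obtain X where X: "X \<subseteq> opR_step M n xs \<Delta> X" "\<pi> \<in> X" by blast
  then have "\<pi> \<in> opR_step M n xs \<Delta> X" by blast
  then obtain ps cs where A: "\<forall>i<n. ps i \<in> \<Delta> \<and> length (cs i) = length (snd (ps i))"
    and B: "\<forall>\<sigma> :: nat \<Rightarrow> bool. \<pi> \<union> {\<lambda>b. \<forall>i<n. inst M xs (ps i) (cs i) b = \<sigma> i} \<in> X"
    unfolding opR_step_def by blast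
  have "\<forall>\<sigma>::nat\<Rightarrow>bool. \<exists>b. length b = length xs \<and> (\<forall>i<n. inst M xs (ps i) (cs i) b = \<sigma> i)"
  proof
    fix \<sigma> :: "nat \<Rightarrow> bool"
    let ?q = "\<lambda>b. \<forall>i<n. inst M xs (ps i) (cs i) b = \<sigma> i"
    have "\<pi> \<union> {?q} \<in> opR_step M n xs \<Delta> X" using B X(1) by blast
    then have "consistent xs (\<pi> \<union> {?q})" unfolding opR_step_def by blast
    then have "\<exists>b. length b = length xs \<and> (\<forall>p\<in>{?q}. p b)"
      unfolding consistent_def by (elim allE[of _ "{?q}"]) auto
    then show "\<exists>b. length b = length xs \<and> ?q b" by auto
  qed
  then show ?thesis using A by blast
qed

lemma pigeon:
  assumes fin: "finite \<Delta>" and inf: "opD M xs \<Delta> {\<lambda>b. True} = \<infinity>"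
  shows "\<exists>p\<in>\<Delta>. Wp M xs p N"
proof -
  let ?K = "card \<Delta>"
  have "\<exists>n. ?K * N < n \<and> opR_inf M n xs \<Delta> {\<lambda>b. True}"
  proof (rule ccontr)
    assume "\<not> ?thesis"
    then have "\<forall>x\<in>enat ` {n. 0 < n \<and> opR_inf M n xs \<Delta> {\<lambda>b. True}}. x \<le> enat (?K * N)"
      by (auto simp: not_less)
    then have "opD M xs \<Delta> {\<lambda>b. True} \<le> enat (?K * N)" unfolding opD_def by (intro Sup_least) auto
    then show False using inf by simp
  qed
  then obtain n where n: "?K * N < n" "opR_inf M n xs \<Delta> {\<lambda>b. True}" by blast
  obtain ps cs where A: "\<forall>i<n. ps i \<in> \<Delta> \<and> length (cs i) = length (snd (ps i))"
    and B: "\<forall>\<sigma>::nat\<Rightarrow>bool. \<exists>b. length b = length xs \<and> (\<forall>i<n. inst M xs (ps i) (cs i) b = \<sigma> i)"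
    using opR_inf_split[OF n(2)] by blast
  let ?S = "\<lambda>p. {i. i < n \<and> ps i = p}"
  have "\<exists>p\<in>\<Delta>. N < card (?S p)"
  proof (rule ccontr)
    assume "\<not> ?thesis"
    then have le: "\<forall>p\<in>\<Delta>. card (?S p) \<le> N" by auto
    have sub: "{..<n} \<subseteq> (\<Union>p\<in>\<Delta>. ?S p)" using A by auto
    have "n = card {..<n}" by simp
    also have "\<dots> \<le> card (\<Union>p\<in>\<Delta>. ?S p)" using sub fin by (intro card_mono) auto
    also have "\<dots> \<le> (\<Sum>p\<in>\<Delta>. card (?S p))" by (rule card_UN_le[OF fin])
    also have "\<dots> \<le> (\<Sum>p\<in>\<Delta>. N)" using le by (intro sum_mono) auto
    also have "\<dots> = ?K * N" by simp
    finally show False using n(1) by simp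
  qed
  then obtain p where p: "p \<in> \<Delta>" "N < card (?S p)" by blast
  obtain I where I: "I \<subseteq> ?S p" "card I = N" "finite I"
    using obtain_subset_with_card_n[of N "?S p"] p(2) by auto
  define l where "l = sorted_list_of_set I"
  have l: "distinct l" "set l = I" "length l = N" using I by (auto simp: l_def)
  have lI: "l ! i < n \<and> ps (l ! i) = p" if "i < N" for i
  proof -
    have "l ! i \<in> I" using l that nth_mem by metis
    then show ?thesis using I(1) by auto
  qed
  have W1: "\<forall>i<N. length (cs (l ! i)) = length (snd p)" using lI A by metis
  have W2: "\<forall>\<sigma>::nat\<Rightarrow>bool. \<exists>b. length b = length xs \<and> (\<forall>i<N. inst M xs p (cs (l ! i)) b = \<sigma> i)"
  proof
    fix \<sigma> :: "nat \<Rightarrow> bool"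
    define \<sigma>' where "\<sigma>' j = (\<exists>i<N. l ! i = j \<and> \<sigma> i)" for j
    obtain b where b: "length b = length xs" "\<forall>j<n. inst M xs (ps j) (cs j) b = \<sigma>' j" using B by blast
    have "\<forall>i<N. inst M xs p (cs (l ! i)) b = \<sigma> i"
    proof (intro allI impI)
      fix i assume i: "i < N"
      have "\<sigma>' (l ! i) = \<sigma> i" unfolding \<sigma>'_def using l i by (auto simp: nth_eq_iff_index_eq)
      then show "inst M xs p (cs (l ! i)) b = \<sigma> i" using b(2) lI[OF i] by metis
    qed
    then show "\<exists>b. length b = length xs \<and> (\<forall>i<N. inst M xs p (cs (l ! i)) b = \<sigma> i)"
      using b(1) by (intro exI[of _ b] conjI)
  qed
  have "Wp M xs p N" unfolding Wp_def using W1 W2 by (intro exI[of _ "\<lambda>i. cs (l ! i)"] conjI) simp_all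
  then show ?thesis using p(1) by blast
qed

lemma uniform:
  assumes fin: "finite \<Delta>" and inf: "opD M xs \<Delta> {\<lambda>b. True} = \<infinity>"
  shows "\<exists>p\<in>\<Delta>. \<forall>N. Wp M xs p N"
proof (rule ccontr)
  assume "\<not> ?thesis"
  then have "\<forall>p\<in>\<Delta>. \<exists>N. \<not> Wp M xs p N" by blast
  then obtain Nf where Nf: "\<forall>p\<in>\<Delta>. \<not> Wp M xs p (Nf p)" by metis
  obtain p where p: "p \<in> \<Delta>" "Wp M xs p (\<Sum>q\<in>\<Delta>. Nf q)" using pigeon[OF fin inf] by blast
  have "Nf p \<le> (\<Sum>q\<in>\<Delta>. Nf q)" using p(1) fin by (intro member_le_sum) auto
  then have "Wp M xs p (Nf p)" using Wp_mono p(2) by blast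
  then show False using Nf p(1) by blast
qed



lemma to_IP:
  fixes M :: "('f, 'r, 'a) lstruct"
  assumes dxs: "distinct xs" and ok: "ok_pfm M xs p" and W: "\<forall>N. Wp M xs p N"
  shows "T_has_IP M"
proof -
  obtain \<theta> zs where p: "p = (\<theta>, zs)" by (cases p)
  have okk: "wfU M \<theta>" "distinct zs" "set xs \<inter> set zs = {}" "fv \<theta> \<subseteq> set xs \<union> set zs"
    using ok p by (auto simp: ok_pfm_def)
  obtain as where as: "distinct as" "set as = params \<theta>"
    using finite_distinct_list[OF finite_params[of \<theta>]] by auto
  define B1 where "B1 = Suc (Max (set xs \<union> set zs \<union> bvars \<theta> \<union> {0}))"
  have B1: "v < B1" if "v \<in> set xs \<union> set zs \<union> bvars \<theta>" for v
  proof -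
    have "v \<le> Max (set xs \<union> set zs \<union> bvars \<theta> \<union> {0})"
      using that by (intro Max_ge) (auto simp: finite_bvars)
    then show ?thesis by (simp add: B1_def)
  qed
  define iv where "iv a = the_inv_into {..<length as} (nth as) a" for a
  have injn: "inj_on (nth as) {..<length as}" using as(1) by (intro inj_on_nth) auto
  have iv: "iv a < length as \<and> as ! iv a = a" if "a \<in> set as" for a
  proof -
    have "a \<in> nth as ` {..<length as}" using that by (auto simp: in_set_conv_nth)
    then show ?thesis unfolding iv_def
      using the_inv_into_into[OF injn, of a "{..<length as}"] f_the_inv_into_f[OF injn] by auto
  qed
  define ws where "ws = map (\<lambda>j. B1 + j) [0..<length as]"
  define z where "z a = B1 + iv a" for a
  define \<theta>' where "\<theta>' = elimF z \<theta>"
  have lws: "length ws = length as" by (simp add: ws_def)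
  have zws: "z a = ws ! iv a" if "a \<in> set as" for a
    using iv[OF that] by (simp add: ws_def z_def)
  have ws_big: "B1 \<le> w" if "w \<in> set ws" for w using that by (auto simp: ws_def)
  have dws: "distinct ws" by (simp add: ws_def distinct_map)
  have dys: "distinct (zs @ ws)"
    using dws okk(2) ws_big B1 by fastforce
  have disj: "set xs \<inter> set (zs @ ws) = {}"
    using okk(3) ws_big B1 by fastforce
  have pas: "{a. Inr a \<in> set1_fm \<theta>} = set as" using as(2) by (simp add: params_def)
  have fvt: "fv \<theta>' \<subseteq> set xs \<union> set (zs @ ws)"
  proof
    fix v assume "v \<in> fv \<theta>'"
    then have "v \<in> fv \<theta> \<or> v \<in> z ` set as" using fv_elimF[of z \<theta>] pas unfolding \<theta>'_def by auto
    then show "v \<in> set xs \<union> set (zs @ ws)"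
    proof
      assume "v \<in> fv \<theta>" then show ?thesis using okk(4) by auto
    next
      assume "v \<in> z ` set as"
      then obtain a where a: "a \<in> set as" "v = z a" by blast
      then have "v = ws ! iv a" "iv a < length ws" using zws iv lws by auto
      then show ?thesis by auto
    qed
  qed
  have wf: "wfL M \<theta>'" unfolding wfL_def \<theta>'_def using okk(1) by (simp add: wfU_def wf_elimF)
  have sem: "satL M (env xs b (zs @ ws) (c @ as)) \<theta>' = inst M xs p c b"
    if b: "length b = length xs" and c: "length c = length zs" for b c
  proof -
    let ?e' = "env xs b (zs @ ws) (c @ as)"
    let ?e = "env xs b zs c"
    have lca: "length (c @ as) = length (zs @ ws)" using c lws by simp
    have H1: "\<forall>v\<in>fv \<theta>. ?e' v = ?e v"
    proof
      fix v assume "v \<in> fv \<theta>"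
      then have "v \<in> set xs \<or> v \<in> set zs" using okk(4) by auto
      then show "?e' v = ?e v"
      proof
        assume "v \<in> set xs"
        then obtain j where j: "j < length xs" "v = xs ! j" by (auto simp: in_set_conv_nth)
        show ?thesis using env_x[OF dxs b j(1)] j(2) by simp
      next
        assume "v \<in> set zs"
        then obtain j where j: "j < length zs" "v = zs ! j" by (auto simp: in_set_conv_nth)
        have "?e' ((zs @ ws) ! j) = (c @ as) ! j"
          using j(1) by (intro env_y[OF dys disj b lca]) simp
        moreover have "?e (zs ! j) = c ! j" using env_y[OF okk(2) okk(3) b c j(1)] .
        ultimately show ?thesis using j c by (simp add: nth_append)
      qed
    qed
    have H2: "\<forall>a. Inr a \<in> set1_fm \<theta> \<longrightarrow> ?e' (z a) = a"
    proof (intro allI impI)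
      fix a assume "Inr a \<in> set1_fm \<theta>"
      then have a: "a \<in> set as" using pas by blast
      have i: "iv a < length as" "as ! iv a = a" using iv[OF a] by auto
      have "?e' ((zs @ ws) ! (length zs + iv a)) = (c @ as) ! (length zs + iv a)"
        using i(1) lws by (intro env_y[OF dys disj b lca]) simp
      then show "?e' (z a) = a" using zws[OF a] i c by (simp add: nth_append)
    qed
    have H3: "\<forall>v\<in>bvars \<theta>. \<forall>a. Inr a \<in> set1_fm \<theta> \<longrightarrow> z a \<noteq> v"
    proof (intro ballI allI impI)
      fix v a assume "v \<in> bvars \<theta>" "Inr a \<in> set1_fm \<theta>"
      then have "v < B1" using B1 by blast
      then show "z a \<noteq> v" by (simp add: z_def)
    qed
    show ?thesis
      unfolding satL_def \<theta>'_def inst_def p satU_def using sat_elimF[OF H1 H2 H3] by simp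
  qed
  have big: "\<forall>N. \<exists>B. B \<subseteq> {c. length c = length (zs @ ws)} \<and> finite B \<and> card B = N \<and>
        (\<forall>t :: 'a list \<Rightarrow> bool. \<exists>b. length b = length xs \<and>
            (\<forall>c\<in>B. satL M (env xs b (zs @ ws) c) \<theta>' = t c))"
  proof
    fix N
    obtain cs where cs: "\<forall>i<N. length (cs i) = length zs"
      "\<forall>\<sigma>::nat\<Rightarrow>bool. \<exists>b. length b = length xs \<and> (\<forall>i<N. inst M xs p (cs i) b = \<sigma> i)"
      using spec[OF W, of N] unfolding Wp_def p snd_conv by (elim exE conjE) metis
    have injcs: "inj_on cs {..<N}"
    proof (rule inj_onI)
      fix i j assume ij: "i \<in> {..<N}" "j \<in> {..<N}" "cs i = cs j"
      show "i = j"
      proof (rule ccontr)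
        assume "i \<noteq> j"
        from spec[OF cs(2), of "\<lambda>l. l = i"] obtain b where b: "\<forall>l<N. inst M xs p (cs l) b = (l = i)" by blast
        have "inst M xs p (cs i) b" using b ij(1) by simp
        moreover have "\<not> inst M xs p (cs j) b" using b ij(2) \<open>i \<noteq> j\<close> by simp
        ultimately show False using ij(3) by simp
      qed
    qed
    define B where "B = (\<lambda>i. cs i @ as) ` {..<N}"
    have "inj_on (\<lambda>i. cs i @ as) {..<N}" using injcs by (auto simp: inj_on_def)
    then have cB: "card B = N" by (simp add: B_def card_image)
    have sB: "B \<subseteq> {c. length c = length (zs @ ws)}" using cs(1) lws by (auto simp: B_def)
    have tB: "\<forall>t :: 'a list \<Rightarrow> bool. \<exists>b. length b = length xs \<and>
            (\<forall>c\<in>B. satL M (env xs b (zs @ ws) c) \<theta>' = t c)"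
    proof
      fix t :: "'a list \<Rightarrow> bool"
      from spec[OF cs(2), of "\<lambda>i. t (cs i @ as)"] obtain b where b: "length b = length xs" "\<forall>i<N. inst M xs p (cs i) b = t (cs i @ as)"
        by blast
      have "\<forall>c\<in>B. satL M (env xs b (zs @ ws) c) \<theta>' = t c"
      proof
        fix c assume "c \<in> B"
        then obtain i where i: "i < N" "c = cs i @ as" by (auto simp: B_def)
        show "satL M (env xs b (zs @ ws) c) \<theta>' = t c"
          using sem[OF b(1) cs(1)[rule_format, OF i(1)]] b(2) i by simp
      qed
      then show "\<exists>b. length b = length xs \<and> (\<forall>c\<in>B. satL M (env xs b (zs @ ws) c) \<theta>' = t c)"
        using b(1) by (intro exI[of _ b] conjI)
    qed
    show "\<exists>B. B \<subseteq> {c. length c = length (zs @ ws)} \<and> finite B \<and> card B = N \<and>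
        (\<forall>t :: 'a list \<Rightarrow> bool. \<exists>b. length b = length xs \<and>
            (\<forall>c\<in>B. satL M (env xs b (zs @ ws) c) \<theta>' = t c))"
      using sB cB tB by (intro exI[of _ B] conjI) (auto simp: B_def)
  qed
  have "formula_IP M \<theta>' xs (zs @ ws)"
    unfolding formula_IP_def using wf dxs dys disj fvt big by (intro conjI) auto
  then show ?thesis unfolding T_has_IP_def by blast
qed

theorem proposition1p3:
  fixes M :: "('f, 'r, 'a) lstruct"
  assumes "aleph1_saturated M"
  shows "T_has_IP M \<longleftrightarrow>
    (\<exists>(xs :: nat list) (\<Delta> :: ('f, 'r, 'a) pfm set).
       distinct xs \<and> finite \<Delta> \<and> (\<forall>p\<in>\<Delta>. ok_pfm M xs p) \<and>
       opD M xs \<Delta> {\<lambda>b. True} = \<infinity>)"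
proof
  assume "T_has_IP M"
  then obtain \<phi> xs ys where "formula_IP M \<phi> xs ys" unfolding T_has_IP_def by blast
  then interpret ipc M \<phi> xs ys by unfold_locales
  show "\<exists>(xs :: nat list) (\<Delta> :: ('f, 'r, 'a) pfm set).
       distinct xs \<and> finite \<Delta> \<and> (\<forall>p\<in>\<Delta>. ok_pfm M xs p) \<and>
       opD M xs \<Delta> {\<lambda>b. True} = \<infinity>"
    by (rule forward[OF assms])
next
  assume "\<exists>(xs :: nat list) (\<Delta> :: ('f, 'r, 'a) pfm set).
       distinct xs \<and> finite \<Delta> \<and> (\<forall>p\<in>\<Delta>. ok_pfm M xs p) \<and>
       opD M xs \<Delta> {\<lambda>b. True} = \<infinity>"
  then obtain xs :: "nat list" and \<Delta> :: "('f, 'r, 'a) pfm set" where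
    H: "distinct xs" "finite \<Delta>" "\<forall>p\<in>\<Delta>. ok_pfm M xs p" "opD M xs \<Delta> {\<lambda>b. True} = \<infinity>"
    by blast
  obtain p where "p \<in> \<Delta>" "\<forall>N. Wp M xs p N" using uniform[OF H(2) H(4)] by blast
  then show "T_has_IP M" using to_IP[OF H(1)] H(3) by blast
qed

end
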